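(* Let $S\subset\mathcal P$ be finite and let $\Delta$ be a bounded region of $\mathcal L_S$ with $n$ sides, with $P_k$ and $D_k$ ($k\in\mathbb{Z}/n\mathbb{Z}$) as in the context. If $D_k=D_{k+1}$, then $\overleftrightarrow{P_kP_{k+1}}\cap S=\overline{P_kP_{k+1}}\cap S$ (the full line through $P_k,P_{k+1}$ meets $S$ only within the closed segment between them). If $D_k\neq D_{k+1}$, then $\overline{P_kP_{k+1}}\cap S=\{P_k,P_{k+1}\}$.
   Context: $\mathcal P=\mathbb{R}^2\setminus\{(0,0)\}$; for $P=(A,B)\in\mathcal P$, $L_P$ is the line $Ax+By=1$ in $\mathbb{R}^2$; $\mathcal L_S=\{L_P\mid P\in S\}$; $O$ is the origin. For finite $S$, the regions of $\mathcal L_S$ are the closures of the connected components of $\mathbb{R}^2\setminus\bigcup_{P\in S}L_P$. For a bounded region $\Delta$ with $n$ sides, $L_k$ ($k\in\mathbb{Z}/n\mathbb{Z}$) are the lines containing the sides of $\Delta$ in clockwise order around $\Delta$, $P_k\in S$ is the point with $L_{P_k}=L_k$, and $D_k\in\{l,r\}$ is the side (left or right) of $L_k$ on which $O$ lies for a traveller moving along the side of $\Delta$ on $L_k$ clockwise around $\Delta$ (with $\Delta$ on the traveller's right). $\overleftrightarrow{XY}$ denotes the line and $\overline{XY}$ the closed segment through $X,Y$. *)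

theory Defs
  imports "HOL-Analysis.Analysis"
begin

definition lineL :: "real \<times> real \<Rightarrow> (real \<times> real) set" where
  "lineL P = {z. fst P * fst z + snd P * snd z = 1}"

definition regions :: "(real \<times> real) set \<Rightarrow> (real \<times> real) set set" where
  "regions S = closure ` components (- (\<Union>P\<in>S. lineL P))"

text \<open>The lines of S containing a side of the region \<Delta> (i.e. meeting \<Delta> in more than one point).\<close>

definition side_points :: "(real \<times> real) set \<Rightarrow> (real \<times> real) set \<Rightarrow> (real \<times> real) set" where
  "side_points S \<Delta> = {P \<in> S. \<exists>x y. x \<noteq> y \<and> x \<in> \<Delta> \<inter> lineL P \<and> y \<in> \<Delta> \<inter> lineL P}"

text \<open>Cross product: cross d w > 0 iff w points to the left of direction d.\<close>

definition cross :: "real \<times> real \<Rightarrow> real \<times> real \<Rightarrow> real" where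
  "cross d w = fst d * snd w - snd d * fst w"

text \<open>d is a direction of travel along L_P with \<Delta> on the traveller's right.\<close>

definition traveller_dir :: "(real \<times> real) set \<Rightarrow> real \<times> real \<Rightarrow> real \<times> real \<Rightarrow> bool" where
  "traveller_dir \<Delta> P d \<longleftrightarrow> d \<noteq> 0 \<and> fst P * fst d + snd P * snd d = 0 \<and>
     (\<forall>p\<in>lineL P. \<forall>q\<in>\<Delta>. cross d (q - p) \<le> 0)"

datatype lr = Lft | Rgt

text \<open>D: the side (left/right) of L_P on which the origin lies for the traveller.\<close>

definition origin_side :: "(real \<times> real) set \<Rightarrow> real \<times> real \<Rightarrow> lr" where
  "origin_side \<Delta> P = (if \<exists>d. traveller_dir \<Delta> P d \<and> (\<forall>p\<in>lineL P. cross d (0 - p) > 0)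
                        then Lft else Rgt)"

text \<open>P_0,...,P_(n-1) enumerate the sides of \<Delta> in clockwise order: side k is followed
  (travelling with \<Delta> on the right) by side k+1 mod n, i.e. the vertex shared with side k+1
  is the endpoint of side k in the direction of travel.\<close>

definition clockwise_sides ::
  "(real \<times> real) set \<Rightarrow> (real \<times> real) set \<Rightarrow> nat \<Rightarrow> (nat \<Rightarrow> real \<times> real) \<Rightarrow> bool" where
  "clockwise_sides S \<Delta> n P \<longleftrightarrow>
     bij_betw P {..<n} (side_points S \<Delta>) \<and>
     (\<forall>k<n. \<exists>v d. v \<in> \<Delta> \<inter> lineL (P k) \<inter> lineL (P ((k + 1) mod n)) \<and>
        traveller_dir \<Delta> (P k) d \<and>
        (\<forall>q\<in>\<Delta> \<inter> lineL (P k). fst d * fst (q - v) + snd d * snd (q - v) \<le> 0))"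

end

theory Submission
  imports Defs
begin

lemma inner_pp: "inner (c::real\<times>real) x = fst c * fst x + snd c * snd x"
  by (cases c, cases x) simp

lemma half_plane:
  assumes "\<Delta> \<in> regions S" and "c \<in> S"
  shows "(\<forall>q\<in>\<Delta>. fst c * fst q + snd c * snd q \<ge> 1) \<or> (\<forall>q\<in>\<Delta>. fst c * fst q + snd c * snd q \<le> 1)"
proof -
  obtain C where C: "C \<in> components (- (\<Union>P\<in>S. lineL P))" and D: "\<Delta> = closure C"
    using assms(1) unfolding regions_def by blast
  have con: "connected C" using C by (rule in_components_connected)
  have sub: "C \<subseteq> - (\<Union>P\<in>S. lineL P)" using C by (rule in_components_subset)
  have nz: "\<forall>z\<in>C. inner c z \<noteq> 1"
    using sub assms(2) by (auto simp: lineL_def inner_pp)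
  have "(\<forall>x\<in>C. inner c x \<ge> 1) \<or> (\<forall>x\<in>C. inner c x \<le> 1)"
  proof (rule ccontr)
    assume "\<not> ?thesis"
    then obtain x y where "x \<in> C" "y \<in> C" "inner c x \<le> 1" "1 \<le> inner c y" by force
    then show False using connected_ivt_hyperplane[OF con] nz by blast
  qed
  then have "closure C \<subseteq> {x. inner c x \<ge> 1} \<or> closure C \<subseteq> {x. inner c x \<le> 1}"
    using closure_minimal[OF _ closed_halfspace_ge] closure_minimal[OF _ closed_halfspace_le]
    by (metis mem_Collect_eq subsetI)
  then show ?thesis unfolding D by (auto simp: inner_pp)
qed

lemma perp_param:
  fixes a1 a2 d1 d2 :: real
  assumes "a1 * d1 + a2 * d2 = 0" "(a1, a2) \<noteq> (0,0)"
  shows "\<exists>\<mu>. d1 = - \<mu> * a2 \<and> d2 = \<mu> * a1"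
proof -
  have N: "a1^2 + a2^2 \<noteq> 0" using assms(2)
    by (metis add_nonneg_eq_0_iff power_not_zero zero_le_power2 prod.inject zero_power2)
  define \<mu> where "\<mu> = (d2*a1 - d1*a2)/(a1^2+a2^2)"
  have "d1 * (a1^2+a2^2) = - (d2*a1 - d1*a2) * a2"
    using assms(1) by (simp add: power2_eq_square) algebra
  moreover have "d2 * (a1^2+a2^2) = (d2*a1 - d1*a2) * a1"
    using assms(1) by (simp add: power2_eq_square) algebra
  ultimately show ?thesis using N unfolding \<mu>_def
    by (intro exI[of _ \<mu>]) (auto simp: field_simps \<mu>_def)
qed

lemma origin_side_iff:
  assumes "a \<noteq> (0,0)"
  shows "origin_side \<Delta> a = Lft \<longleftrightarrow> (\<forall>q\<in>\<Delta>. fst a * fst q + snd a * snd q \<ge> 1)"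
proof
  assume L: "origin_side \<Delta> a = Lft"
  then obtain d where td: "traveller_dir \<Delta> a d" and o: "\<forall>p\<in>lineL a. cross d (0 - p) > 0"
    unfolding origin_side_def by (metis lr.distinct(1))
  obtain a1 a2 where a: "a = (a1,a2)" by (cases a)
  obtain d1 d2 where d: "d = (d1,d2)" by (cases d)
  have perp: "a1 * d1 + a2 * d2 = 0" using td a d by (simp add: traveller_dir_def)
  obtain \<mu> where mu: "d1 = - \<mu> * a2" "d2 = \<mu> * a1" using perp_param[OF perp] assms a by auto
  have N: "a1^2 + a2^2 \<noteq> 0" using assms a
    by (metis add_nonneg_eq_0_iff power_not_zero zero_le_power2 prod.inject zero_power2)
  define p where "p = (a1/(a1^2+a2^2), a2/(a1^2+a2^2))"
  have gen: "a1 * (a1/M) + a2 * (a2/M) = (a1^2+a2^2)/M" for M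
    by (simp add: power2_eq_square add_divide_distrib)
  have "a1 * (a1/(a1^2+a2^2)) + a2 * (a2/(a1^2+a2^2)) = 1"
    using gen[of "a1^2+a2^2"] N by simp
  then have pL: "p \<in> lineL a" using N unfolding p_def lineL_def a by simp
  have "cross d (0 - p) > 0" using o pL by blast
  moreover have "cross d (0 - p) = \<mu> * (a1 * fst p + a2 * snd p)"
    unfolding cross_def d mu by (simp add: algebra_simps)
  moreover have "a1 * fst p + a2 * snd p = 1" using pL a by (simp add: lineL_def)
  ultimately have mupos: "\<mu> > 0" by simp
  show "\<forall>q\<in>\<Delta>. fst a * fst q + snd a * snd q \<ge> 1"
  proof
    fix q assume "q \<in> \<Delta>"
    then have "cross d (q - p) \<le> 0" using td pL unfolding traveller_dir_def by blast
    then have "- \<mu> * (a1 * (fst q - fst p) + a2 * (snd q - snd p)) \<le> 0"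
      unfolding cross_def d mu by (simp add: algebra_simps)
    moreover have "a1 * fst p + a2 * snd p = 1" using pL a by (simp add: lineL_def)
    ultimately have "\<mu> * (a1 * fst q + a2 * snd q - 1) \<ge> 0" by (simp add: algebra_simps)
    then show "fst a * fst q + snd a * snd q \<ge> 1" using mupos a
      by (simp add: zero_le_mult_iff)
  qed
next
  assume H: "\<forall>q\<in>\<Delta>. fst a * fst q + snd a * snd q \<ge> 1"
  define d where "d = (- snd a, fst a)"
  have "traveller_dir \<Delta> a d"
    unfolding traveller_dir_def
  proof (intro conjI ballI)
    show "d \<noteq> 0" using assms unfolding d_def by (cases a) (auto simp: zero_prod_def)
    show "fst a * fst d + snd a * snd d = 0" unfolding d_def by simp
    fix p q assume "p \<in> lineL a" "q \<in> \<Delta>"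
    then show "cross d (q - p) \<le> 0" using H unfolding cross_def d_def lineL_def
      by (auto simp: algebra_simps)
  qed
  moreover have "\<forall>p\<in>lineL a. cross d (0 - p) > 0"
    unfolding cross_def d_def lineL_def by (auto simp: algebra_simps)
  ultimately show "origin_side \<Delta> a = Lft" unfolding origin_side_def by (metis (no_types, lifting))
qed

lemma not_both:
  fixes a b v x :: "real \<times> real"
  assumes "fst a  *  fst v + snd a  *  snd v = 1" "fst b  *  fst v + snd b  *  snd v = 1"
    "fst a  *  fst x + snd a  *  snd x = 1" "fst b  *  fst x + snd b  *  snd x = 1" "x \<noteq> v"
  shows "a = b"
proof -
  obtain a1 a2 b1 b2 v1 v2 x1 x2 where e: "a = (a1,a2)" "b = (b1,b2)" "v = (v1,v2)" "x = (x1,x2)"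
    by (metis prod.exhaust)
  have h: "a1 * v1+a2 * v2 = 1" "b1 * v1+b2 * v2 = 1" "a1 * x1+a2 * x2 = 1" "b1 * x1+b2 * x2 = 1"
    "x1 \<noteq> v1 \<or> x2 \<noteq> v2" using assms e by auto
  have w: "a1 * (x1-v1)+a2 * (x2-v2) = 0" "b1 * (x1-v1)+b2 * (x2-v2) = 0" using h by (simp_all add: algebra_simps)
  have det: "v1 * (x2-v2) - v2 * (x1-v1) \<noteq> 0"
  proof
    assume D: "v1 * (x2-v2) - v2 * (x1-v1) = 0"
    have "(a1 * v1+a2 * v2) * (x1-v1) = v1 * (a1 * (x1-v1)+a2 * (x2-v2)) - a2 * (v1 * (x2-v2) - v2 * (x1-v1))"
      by (simp add: algebra_simps)
    then have "x1 - v1 = 0" using h w D by simp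
    moreover have "(a1 * v1+a2 * v2) * (x2-v2) = v2 * (a1 * (x1-v1)+a2 * (x2-v2)) + a1 * (v1 * (x2-v2) - v2 * (x1-v1))"
      by (simp add: algebra_simps)
    then have "x2 - v2 = 0" using h w D by simp
    ultimately show False using h by simp
  qed
  have e1: "(a1-b1) * v1 + (a2-b2) * v2 = 0" "(a1-b1) * (x1-v1) + (a2-b2) * (x2-v2) = 0"
    using h w by (simp_all add: algebra_simps)
  have "(a1-b1) * (v1 * (x2-v2) - v2 * (x1-v1)) = (x2-v2) * ((a1-b1) * v1 + (a2-b2) * v2) - v2 * ((a1-b1) * (x1-v1) + (a2-b2) * (x2-v2))"
    by (simp add: algebra_simps)
  then have "a1 = b1" using e1 det by simp
  have "(a2-b2) * (v1 * (x2-v2) - v2 * (x1-v1)) = v1 * ((a1-b1) * (x1-v1) + (a2-b2) * (x2-v2)) - (x1-v1) * ((a1-b1) * v1 + (a2-b2) * v2)"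
    by (simp add: algebra_simps)
  then have "a2 = b2" using e1 det by simp
  show ?thesis using e \<open>a1 = b1\<close> \<open>a2 = b2\<close> by simp
qed

lemma key:
  fixes a b c x1 x2 :: "real \<times> real" and l :: real
  assumes "fst a * fst x1 + snd a * snd x1 = 1" "fst b * fst x2 + snd b * snd x2 = 1"
    "c = (1 - l) *\<^sub>R a + l *\<^sub>R b"
    "(\<forall>q\<in>{x1,x2}. fst c * fst q + snd c * snd q \<ge> 1) \<or> (\<forall>q\<in>{x1,x2}. fst c * fst q + snd c * snd q \<le> 1)"
  shows "(l * (fst b * fst x1 + snd b * snd x1 - 1)) * ((1 - l) * (fst a * fst x2 + snd a * snd x2 - 1)) \<ge> 0"
proof -
  have c1: "fst c * fst x1 + snd c * snd x1 - 1 = l * (fst b * fst x1 + snd b * snd x1 - 1)"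
    using assms(1) unfolding assms(3) by simp algebra
  have c2: "fst c * fst x2 + snd c * snd x2 - 1 = (1 - l) * (fst a * fst x2 + snd a * snd x2 - 1)"
    using assms(2) unfolding assms(3) by simp algebra
  show ?thesis using assms(4) unfolding c1[symmetric] c2[symmetric]
    by (auto intro: mult_nonneg_nonneg mult_nonpos_nonpos)
qed

theorem lemma3p9:
  fixes S :: "(real \<times> real) set" and \<Delta> :: "(real \<times> real) set"
    and n :: nat and P :: "nat \<Rightarrow> real \<times> real"
  assumes "finite S" and "(0, 0) \<notin> S"
    and "\<Delta> \<in> regions S" and "bounded \<Delta>"
    and "n = card (side_points S \<Delta>)"
    and "clockwise_sides S \<Delta> n P"
    and "k < n"
  shows "(origin_side \<Delta> (P k) = origin_side \<Delta> (P ((k + 1) mod n)) \<longrightarrow>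
            affine hull {P k, P ((k + 1) mod n)} \<inter> S = closed_segment (P k) (P ((k + 1) mod n)) \<inter> S)
       \<and> (origin_side \<Delta> (P k) \<noteq> origin_side \<Delta> (P ((k + 1) mod n)) \<longrightarrow>
            closed_segment (P k) (P ((k + 1) mod n)) \<inter> S = {P k, P ((k + 1) mod n)})"
proof -
  define a where "a = P k"
  define b where "b = P ((k + 1) mod n)"
  have bij: "bij_betw P {..<n} (side_points S \<Delta>)" and
    cw: "\<forall>k<n. \<exists>v d. v \<in> \<Delta> \<inter> lineL (P k) \<inter> lineL (P ((k + 1) mod n)) \<and>
        traveller_dir \<Delta> (P k) d \<and>
        (\<forall>q\<in>\<Delta> \<inter> lineL (P k). fst d * fst (q - v) + snd d * snd (q - v) \<le> 0)"
    using assms(6) unfolding clockwise_sides_def by auto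
  have npos: "0 < n" using assms(7) by simp
  have aS: "a \<in> side_points S \<Delta>" using bij assms(7) unfolding a_def bij_betw_def by auto
  have bS: "b \<in> side_points S \<Delta>" using bij npos unfolding b_def bij_betw_def by auto
  obtain v where v: "v \<in> \<Delta>" "v \<in> lineL a" "v \<in> lineL b"
    using cw assms(7) unfolding a_def b_def by blast
  show ?thesis
  proof (cases "a = b")
    case True
    then show ?thesis unfolding a_def[symmetric] b_def[symmetric] by simp
  next
    case False
    have a0: "a \<noteq> (0,0)" and b0: "b \<noteq> (0,0)" and aSS: "a \<in> S" and bSS: "b \<in> S"
      using aS bS assms(2) unfolding side_points_def by auto
    obtain x1 where x1: "x1 \<in> \<Delta>" "x1 \<in> lineL a" "x1 \<noteq> v"
      using aS unfolding side_points_def by blast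
    obtain x2 where x2: "x2 \<in> \<Delta>" "x2 \<in> lineL b" "x2 \<noteq> v"
      using bS unfolding side_points_def by blast
    have va: "fst a * fst v + snd a * snd v = 1" and vb: "fst b * fst v + snd b * snd v = 1"
      using v by (auto simp: lineL_def)
    have x1a: "fst a * fst x1 + snd a * snd x1 = 1" and x2b: "fst b * fst x2 + snd b * snd x2 = 1"
      using x1 x2 by (auto simp: lineL_def)
    define u1 where "u1 = fst b * fst x1 + snd b * snd x1 - 1"
    define u2 where "u2 = fst a * fst x2 + snd a * snd x2 - 1"
    have u1: "u1 \<noteq> 0" using not_both[OF va vb x1a _ x1(3)] False unfolding u1_def by auto
    have u2: "u2 \<noteq> 0" using not_both[OF vb va x2b _ x2(3)] False unfolding u2_def by auto
    have Da: "origin_side \<Delta> a = Lft \<longleftrightarrow> u2 > 0"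
    proof -
      have "origin_side \<Delta> a = Lft \<longleftrightarrow> (\<forall>q\<in>\<Delta>. fst a * fst q + snd a * snd q \<ge> 1)"
        by (rule origin_side_iff[OF a0])
      moreover have "(\<forall>q\<in>\<Delta>. fst a * fst q + snd a * snd q \<ge> 1) \<longleftrightarrow> u2 > 0"
        using half_plane[OF assms(3) aSS] x2(1) u2 unfolding u2_def by force
      ultimately show ?thesis by simp
    qed
    have Db: "origin_side \<Delta> b = Lft \<longleftrightarrow> u1 > 0"
    proof -
      have "origin_side \<Delta> b = Lft \<longleftrightarrow> (\<forall>q\<in>\<Delta>. fst b * fst q + snd b * snd q \<ge> 1)"
        by (rule origin_side_iff[OF b0])
      moreover have "(\<forall>q\<in>\<Delta>. fst b * fst q + snd b * snd q \<ge> 1) \<longleftrightarrow> u1 > 0"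
        using half_plane[OF assms(3) bSS] x1(1) u1 unfolding u1_def by force
      ultimately show ?thesis by simp
    qed
    have keyc: "(l * u1) * ((1 - l) * u2) \<ge> 0" if "c \<in> S" "c = (1 - l) *\<^sub>R a + l *\<^sub>R b" for c l
    proof -
      have "(\<forall>q\<in>{x1,x2}. fst c * fst q + snd c * snd q \<ge> 1) \<or> (\<forall>q\<in>{x1,x2}. fst c * fst q + snd c * snd q \<le> 1)"
        using half_plane[OF assms(3) that(1)] x1(1) x2(1) by blast
      then show ?thesis using key[OF x1a x2b that(2)] unfolding u1_def u2_def by blast
    qed
    have pr: "u1 * u2 > 0 \<longleftrightarrow> (u2 > 0 \<longleftrightarrow> u1 > 0)"
      using u1 u2 by (auto simp: zero_less_mult_iff)
    have eqiff: "origin_side \<Delta> a = origin_side \<Delta> b \<longleftrightarrow> u1 * u2 > 0"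
      using Da Db pr by (cases "origin_side \<Delta> a"; cases "origin_side \<Delta> b") auto
    have segS: "closed_segment a b \<subseteq> affine hull {a, b}"
      using segment_convex_hull convex_hull_subset_affine_hull by metis
    have part1: "affine hull {a, b} \<inter> S = closed_segment a b \<inter> S" if pos: "u1 * u2 > 0"
    proof
      show "closed_segment a b \<inter> S \<subseteq> affine hull {a, b} \<inter> S" using segS by blast
      show "affine hull {a, b} \<inter> S \<subseteq> closed_segment a b \<inter> S"
      proof
        fix c assume c: "c \<in> affine hull {a, b} \<inter> S"
        then obtain s t where st: "c = s *\<^sub>R a + t *\<^sub>R b" "s + t = 1"
          unfolding affine_hull_2 by blast
        have "s = 1 - t" using st(2) by simp
        then have ce: "c = (1 - t) *\<^sub>R a + t *\<^sub>R b" using st(1) by simp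
        have "(t * u1) * ((1 - t) * u2) \<ge> 0" using keyc c ce by blast
        then have "(t * (1 - t)) * (u1 * u2) \<ge> 0" by (simp add: algebra_simps)
        then have "t * (1 - t) \<ge> 0" using pos by (simp add: zero_le_mult_iff)
        then have "0 \<le> t \<and> t \<le> 1" by (auto simp: zero_le_mult_iff)
        then show "c \<in> closed_segment a b \<inter> S" using ce c in_segment(1) by blast
      qed
    qed
    have part2: "closed_segment a b \<inter> S = {a, b}" if neg: "u1 * u2 < 0"
    proof
      show "{a, b} \<subseteq> closed_segment a b \<inter> S" using aSS bSS by auto
      show "closed_segment a b \<inter> S \<subseteq> {a, b}"
      proof
        fix c assume c: "c \<in> closed_segment a b \<inter> S"
        then obtain t where t: "0 \<le> t" "t \<le> 1" "c = (1 - t) *\<^sub>R a + t *\<^sub>R b"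
          using in_segment(1) by blast
        have "(t * u1) * ((1 - t) * u2) \<ge> 0" using keyc c t by blast
        then have "(t * (1 - t)) * (u1 * u2) \<ge> 0" by (simp add: algebra_simps)
        then have "t * (1 - t) \<le> 0" using neg mult_pos_neg[of "t * (1 - t)" "u1 * u2"] by linarith
        then have "t = 0 \<or> t = 1" using t by (smt (verit) mult_pos_pos)
        then show "c \<in> {a, b}" using t by auto
      qed
    qed
    show ?thesis unfolding a_def[symmetric] b_def[symmetric]
      using part1 part2 eqiff u1 u2 by (metis linorder_neqE_linordered_idom mult_eq_0_iff)
  qed
qed

end
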